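(* Let $t\in\mathbb{R}\setminus\{0\}$, $\varepsilon\in(0,\frac1e)$ and $R:=\left\lfloor r\!\left(\frac{e|t|}{2},\frac54\varepsilon\right)/2\right\rfloor$. Then $$\sup_{x\in[-1,1]}\left|\cos(tx)-\Big(J_0(t)+2\sum_{k=1}^R(-1)^kJ_{2k}(t)T_{2k}(x)\Big)\right|\le\varepsilon,\qquad \sup_{x\in[-1,1]}\left|\sin(tx)-2\sum_{k=0}^R(-1)^kJ_{2k+1}(t)T_{2k+1}(x)\right|\le\varepsilon.$$
   Context: $J_m$ denotes the Bessel function of the first kind of order $m$; $T_m(x)=\cos(m\arccos x)$ the Chebyshev polynomial of the first kind. For $\tau>0$ and $\eta\in(0,1)$, $r(\tau,\eta)$ denotes the unique solution $r\in(\tau,\infty)$ of $\eta=(\tau/r)^r$. *)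

theory Defs
  imports "HOL-Analysis.Analysis"
begin

definition bessel_J :: "nat \<Rightarrow> real \<Rightarrow> real" where
  "bessel_J m t = (\<Sum>k. (-1) ^ k / (fact k * fact (k + m)) * (t / 2) ^ (2 * k + m))"

definition cheb_T :: "nat \<Rightarrow> real \<Rightarrow> real" where
  "cheb_T m x = cos (real m * arccos x)"

definition r_fun :: "real \<Rightarrow> real \<Rightarrow> real" where
  "r_fun \<tau> \<eta> = (THE r. \<tau> < r \<and> \<eta> = (\<tau> / r) powr r)"

end

theory Submission
  imports Defs
begin


lemma gen_series_deriv:
  fixes b :: "nat \<Rightarrow> real" and e :: "nat \<Rightarrow> nat"
  assumes S: "\<And>y. 0 \<le> y \<Longrightarrow> summable (\<lambda>k. \<bar>b k\<bar> * y ^ e k)"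
  shows "summable (\<lambda>k. b k * x ^ e k)"
    and "summable (\<lambda>k. b k * real (e k) * x ^ (e k - 1))"
    and "((\<lambda>x. \<Sum>k. b k * x ^ e k) has_real_derivative (\<Sum>k. b k * real (e k) * x ^ (e k - 1))) (at x)"
proof -
  define K where "K = \<bar>x\<bar> + 1"
  have K1: "K \<ge> 1" by (simp add: K_def)
  have bound: "norm (b k * real (e k) * z ^ (e k - 1)) \<le> \<bar>b k\<bar> * (2*K) ^ e k"
    if "z \<in> {-K..K}" for k z
  proof -
    have z: "\<bar>z\<bar> \<le> K" using that by auto
    have "\<bar>z\<bar>^(e k - 1) \<le> K^(e k - 1)" by (rule power_mono) (use z in auto)
    also have "\<dots> \<le> K^(e k)" using K1 by (intro power_increasing) auto
    finally have 1: "\<bar>z\<bar>^(e k - 1) \<le> K^(e k)" .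
    have "e k < 2 ^ e k" by (rule less_exp)
    then have 2: "real (e k) \<le> 2 ^ e k"
      by (metis less_imp_le of_nat_le_iff of_nat_numeral of_nat_power)
    have "real (e k) * \<bar>z\<bar>^(e k - 1) \<le> 2 ^ e k * K^(e k)"
      by (intro mult_mono 1 2) auto
    also have "\<dots> = (2*K)^e k" by (simp add: power_mult_distrib)
    finally have 3: "real (e k) * \<bar>z\<bar>^(e k - 1) \<le> (2*K)^e k" .
    have "norm (b k * real (e k) * z ^ (e k - 1)) = \<bar>b k\<bar> * (real (e k) * \<bar>z\<bar>^(e k - 1))"
      by (simp add: abs_mult power_abs)
    also have "\<dots> \<le> \<bar>b k\<bar> * (2*K) ^ e k" by (intro mult_left_mono 3) auto
    finally show ?thesis .
  qed
  have Ssum: "summable (\<lambda>k. \<bar>b k\<bar> * (2*K) ^ e k)" by (rule S) (use K1 in simp)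
  have sx0: "summable (\<lambda>k. \<bar>b k\<bar> * \<bar>x\<bar> ^ e k)" by (rule S) simp
  have eqn: "(\<lambda>k. norm (b k * x ^ e k)) = (\<lambda>k. \<bar>b k\<bar> * \<bar>x\<bar> ^ e k)"
    by (simp add: abs_mult power_abs)
  have sx: "summable (\<lambda>k. b k * x ^ e k)"
    by (rule summable_norm_cancel) (simp only: eqn sx0)
  then show "summable (\<lambda>k. b k * x ^ e k)" .
  have xin: "x \<in> {-K..K}" by (auto simp: K_def)
  show "summable (\<lambda>k. b k * real (e k) * x ^ (e k - 1))"
    by (rule summable_norm_cancel, rule summable_comparison_test[OF _ Ssum]) (use bound xin in auto)
  have "x \<in> interior {-K..K}" by (auto simp: K_def)
  show "((\<lambda>x. \<Sum>k. b k * x ^ e k) has_real_derivative (\<Sum>k. b k * real (e k) * x ^ (e k - 1))) (at x)"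
  proof (rule has_field_derivative_series'(2)[of "{-K..K}" _ "\<lambda>k x. b k * real (e k) * x ^ (e k - 1)" x])
    show "convex {-K..K}" by simp
    show "\<And>n z. z \<in> {-K..K} \<Longrightarrow> ((\<lambda>x. b n * x ^ e n) has_real_derivative b n * real (e n) * z ^ (e n - 1)) (at z within {-K..K})"
      by (auto intro!: derivative_eq_intros)
    show "uniformly_convergent_on {- K..K} (\<lambda>n x. \<Sum>i<n. b i * real (e i) * x ^ (e i - 1))"
      by (rule Weierstrass_m_test'[OF _ Ssum]) (use bound in auto)
  qed (use xin sx \<open>x \<in> interior {-K..K}\<close> in auto)
qed

definition bc :: "nat \<Rightarrow> nat \<Rightarrow> real" where
  "bc m k = (-1)^k / (fact k * fact (k+m)) / 2^(2*k+m)"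

lemma bessel_alt: "bessel_J m t = (\<Sum>k. bc m k * t^(2*k+m))"
  unfolding bessel_J_def bc_def by (simp add: power_divide)

lemma bc_summ: "summable (\<lambda>k. \<bar>bc m k\<bar> * \<bar>y\<bar>^(2*k+m))"
proof -
  have g: "summable (\<lambda>k. \<bar>y\<bar>^m * (inverse (fact k) * (y^2)^k))"
    by (intro summable_mult summable_exp)
  show ?thesis
  proof (rule summable_comparison_test[OF _ g], intro exI allI impI)
    fix k :: nat
    have a: "(1::real) \<le> fact (k+m)" by (rule fact_ge_1)
    have b: "(1::real) \<le> 2^(2*k+m)" by simp
    have "1 * 1 \<le> fact (k+m) * (2::real)^(2*k+m)" by (rule mult_mono[OF a b]) auto
    then have one: "1 \<le> fact (k+m) * (2::real)^(2*k+m)" by simp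
    have "\<bar>bc m k\<bar> = inverse (fact k) / (fact (k+m) * 2^(2*k+m))"
      unfolding bc_def by (simp add: abs_mult divide_inverse)
    also have "\<dots> \<le> inverse (fact k)"
      using one by (simp add: divide_le_eq mult_le_cancel_left1)
    finally have 1: "\<bar>bc m k\<bar> \<le> inverse (fact k)" .
    have "\<bar>y\<bar>^(2*k+m) = \<bar>y\<bar>^m * (\<bar>y\<bar>^2)^k"
      by (metis power_add power_mult mult.commute)
    also have "\<dots> = \<bar>y\<bar>^m * (y^2)^k" by (simp only: power2_abs)
    finally have "\<bar>y\<bar>^(2*k+m) = \<bar>y\<bar>^m * (y^2)^k" .
    then show "norm (\<bar>bc m k\<bar> * \<bar>y\<bar>^(2*k+m)) \<le> \<bar>y\<bar>^m * (inverse (fact k) * (y^2)^k)"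
      using 1 by (simp add: mult_right_mono mult.left_commute)
  qed
qed



lemma frac_aux: "(c::real) \<noteq> 0 \<Longrightarrow> A \<noteq> 0 \<Longrightarrow> B \<noteq> 0 \<Longrightarrow> D \<noteq> 0 \<Longrightarrow>
  X / (A * (c * B)) / (2 * D) * (2 * c) = X / (A * B) / D"
  by (simp add: field_simps)


lemma bc_summ': "0 \<le> y \<Longrightarrow> summable (\<lambda>k. \<bar>bc m k\<bar> * y^(2*k+m))"
  using bc_summ[of m y] by simp

lemma bessel_deriv:
  "summable (\<lambda>k. bc m k * t^(2*k+m))"
  "summable (\<lambda>k. bc m k * real (2*k+m) * t^(2*k+m-1))"
  "(bessel_J m has_real_derivative (\<Sum>k. bc m k * real (2*k+m) * t^(2*k+m-1))) (at t)"
proof -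
  have eq: "bessel_J m = (\<lambda>x. \<Sum>k. bc m k * x^(2*k+m))" by (rule ext) (rule bessel_alt)
  note G = gen_series_deriv[of "bc m" "\<lambda>k. 2*k+m", OF bc_summ']
  show "summable (\<lambda>k. bc m k * t^(2*k+m))" by (rule G(1))
  show "summable (\<lambda>k. bc m k * real (2*k+m) * t^(2*k+m-1))" by (rule G(2))
  show "(bessel_J m has_real_derivative (\<Sum>k. bc m k * real (2*k+m) * t^(2*k+m-1))) (at t)"
    unfolding eq by (rule G(3))
qed

lemma bc_rec: "bc (m+1) k * (2*real k + 2*real m + 2) = bc m k"
proof -
  have f: "fact (k + (m+1)) = (real k + real m + 1) * (fact (k+m) :: real)"
    by (simp add: algebra_simps)
  have p: "(2::real)^(2*k+(m+1)) = 2 * 2^(2*k+m)" by simp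
  have c: "real k + real m + 1 \<noteq> 0" by (simp add: add_nonneg_eq_0_iff)
  have "2*real k + 2*real m + 2 = 2 * (real k + real m + 1)" by simp
  then show ?thesis unfolding bc_def f p
    using frac_aux[OF c, of "fact k" "fact (k+m)" "2^(2*k+m)" "(-1)^k"] by simp
qed

lemma bc0_rec: "bc 0 (Suc k) * (2*real k + 2) = - bc 1 k"
proof -
  have f: "fact (Suc k) = (real k + 1) * (fact k :: real)" by (simp add: algebra_simps)
  have p: "(2::real)^(2*Suc k) = 2 * 2^(2*k+1)" by simp
  have c: "real k + 1 \<noteq> 0" by (simp add: add_nonneg_eq_0_iff)
  have "2*real k + 2 = 2 * (real k + 1)" by simp
  moreover have "(-1::real)^Suc k = - ((-1)^k)" by simp
  ultimately show ?thesis unfolding bc_def f p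
    using frac_aux[OF c, of "fact k" "fact (k+1)" "2^(2*k+1)" "(-1)^k"] by (simp add: f ac_simps)
qed

lemma G_deriv:
  "((\<lambda>s. s^(m+1) * bessel_J (m+1) s) has_real_derivative t^(m+1) * bessel_J m t) (at t)"
proof -
  have S: "summable (\<lambda>k. \<bar>bc (m+1) k\<bar> * y^(2*k+(2*m+2)))" if "0 \<le> y" for y
  proof -
    have s1: "summable (\<lambda>k. y^(m+1) * (\<bar>bc (m+1) k\<bar> * y^(2*k+(m+1))))"
      by (intro summable_mult bc_summ' that)
    have fe: "(\<lambda>k. y^(m+1) * (\<bar>bc (m+1) k\<bar> * y^(2*k+(m+1)))) = (\<lambda>k. \<bar>bc (m+1) k\<bar> * y^(2*k+(2*m+2)))"
    proof (rule ext)
      fix k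
      have "(m+1) + (2*k+(m+1)) = 2*k+(2*m+2)" by simp
      then show "y^(m+1) * (\<bar>bc (m+1) k\<bar> * y^(2*k+(m+1))) = \<bar>bc (m+1) k\<bar> * y^(2*k+(2*m+2))"
        by (metis mult.left_commute power_add)
    qed
    show ?thesis using s1 unfolding fe .
  qed
  note G = gen_series_deriv[of "bc (m+1)" "\<lambda>k. 2*k+(2*m+2)", OF S]
  have eq: "(\<lambda>s. s^(m+1) * bessel_J (m+1) s) = (\<lambda>x. \<Sum>k. bc (m+1) k * x^(2*k+(2*m+2)))"
  proof (rule ext)
    fix s :: real
    have "s^(m+1) * bessel_J (m+1) s = (\<Sum>k. s^(m+1) * (bc (m+1) k * s^(2*k+(m+1))))"
      unfolding bessel_alt by (rule suminf_mult[symmetric]) (rule bessel_deriv(1))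
    also have "\<dots> = (\<Sum>k. bc (m+1) k * s^(2*k+(2*m+2)))"
    proof (rule suminf_cong)
      fix k
      have "(m+1) + (2*k+(m+1)) = 2*k+(2*m+2)" by simp
      then show "s^(m+1) * (bc (m+1) k * s^(2*k+(m+1))) = bc (m+1) k * s^(2*k+(2*m+2))"
        by (metis mult.left_commute power_add)
    qed
    finally show "s^(m+1) * bessel_J (m+1) s = (\<Sum>k. bc (m+1) k * s^(2*k+(2*m+2)))" .
  qed
  have val: "(\<Sum>k. bc (m+1) k * real (2*k+(2*m+2)) * t^(2*k+(2*m+2)-1)) = t^(m+1) * bessel_J m t"
  proof -
    have "t^(m+1) * bessel_J m t = (\<Sum>k. t^(m+1) * (bc m k * t^(2*k+m)))"
      unfolding bessel_alt by (rule suminf_mult[symmetric]) (rule bessel_deriv(1))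
    also have "\<dots> = (\<Sum>k. bc (m+1) k * real (2*k+(2*m+2)) * t^(2*k+(2*m+2)-1))"
    proof (rule suminf_cong)
      fix k
      have e: "(m+1) + (2*k+m) = 2*k+(2*m+2)-1" by simp
      have "bc (m+1) k * real (2*k+(2*m+2)) = bc m k"
        using bc_rec[of m k] by (simp add: algebra_simps)
      then show "t^(m+1) * (bc m k * t^(2*k+m)) = bc (m+1) k * real (2*k+(2*m+2)) * t^(2*k+(2*m+2)-1)"
        by (metis e mult.left_commute power_add)
    qed
    finally show ?thesis by simp
  qed
  show ?thesis unfolding eq val[symmetric] by (rule G(3))
qed

lemma J0_deriv: "(bessel_J 0 has_real_derivative - bessel_J 1 t) (at t)"
proof -
  note D = bessel_deriv[of 0 t]
  have "(\<Sum>k. bc 0 k * real (2*k+0) * t^(2*k+0-1)) = (\<Sum>k. bc 0 (Suc k) * real (2*Suc k+0) * t^(2*Suc k+0-1))"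
    by (subst suminf_split_head[OF D(2)]) simp
  also have "\<dots> = (\<Sum>k. - (bc 1 k * t^(2*k+1)))"
  proof (rule suminf_cong)
    fix k
    have "bc 0 (Suc k) * real (2*Suc k+0) = - bc 1 k"
      using bc0_rec[of k] by (simp add: algebra_simps)
    moreover have "2*Suc k+0-1 = 2*k+1" by simp
    ultimately show "bc 0 (Suc k) * real (2*Suc k+0) * t^(2*Suc k+0-1) = - (bc 1 k * t^(2*k+1))"
      by simp
  qed
  also have "\<dots> = - bessel_J 1 t"
    unfolding bessel_alt using bessel_deriv(1)[of 1 t] by (simp add: suminf_minus)
  finally show ?thesis using D(3) by simp
qed

lemma bessel_at0: "bessel_J 0 0 = 1" "bessel_J (Suc m) 0 = 0"
proof -
  have "bessel_J 0 0 = (\<Sum>k\<in>{0}. bc 0 k * 0^(2*k+0))"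
    unfolding bessel_alt by (rule suminf_finite) auto
  then show "bessel_J 0 0 = 1" by (simp add: bc_def)
  show "bessel_J (Suc m) 0 = 0" unfolding bessel_alt by simp
qed

lemma bessel_neg: "bessel_J m (-t) = (-1)^m * bessel_J m t"
proof -
  have "bessel_J m (-t) = (\<Sum>k. (-1)^m * (bc m k * t^(2*k+m)))"
  proof -
    have eqk: "\<And>k. bc m k * (-t)^(2*k+m) = (-1)^m * (bc m k * t^(2*k+m))"
    proof -
      fix k
      have a: "(-t)^(2*k+m) = (-1)^(2*k+m) * t^(2*k+m)" by (rule power_minus)
      have b: "(-1::real)^(2*k+m) = (-1)^m" by (simp add: power_add)
      show "bc m k * (-t)^(2*k+m) = (-1)^m * (bc m k * t^(2*k+m))" unfolding a b by simp
    qed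
    show ?thesis unfolding bessel_alt by (rule suminf_cong) (rule eqk)
  qed
  also have "\<dots> = (-1)^m * bessel_J m t"
    unfolding bessel_alt by (rule suminf_mult) (rule bessel_deriv(1))
  finally show ?thesis .
qed



lemma frac_aux2: "(c::real) \<noteq> 0 \<Longrightarrow> P \<noteq> 0 \<Longrightarrow> F \<noteq> 0 \<Longrightarrow>
  (2*c) * X / ((2*P) * (c*F)) = X / (P*F)"
  by (simp add: field_simps)

lemma J0_bound: "\<bar>bessel_J 0 t\<bar> \<le> 1"
proof -
  define D1 where "D1 s = (\<Sum>k. bc 1 k * real (2*k+1) * s^(2*k+1-1))" for s
  have dJ1: "(bessel_J 1 has_real_derivative D1 s) (at s)" for s
    unfolding D1_def by (rule bessel_deriv(3))
  have rel: "bessel_J 1 s + s * D1 s = s * bessel_J 0 s" for s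
  proof -
    have a: "((\<lambda>s. s * bessel_J 1 s) has_real_derivative 1 * bessel_J 1 s + D1 s * s) (at s)"
      by (rule DERIV_mult[OF DERIV_ident dJ1])
    have b: "((\<lambda>s. s * bessel_J 1 s) has_real_derivative s * bessel_J 0 s) (at s)"
      using G_deriv[of 0 s] by simp
    show ?thesis using DERIV_unique[OF a b] by (simp add: mult.commute)
  qed
  define E where "E s = bessel_J 0 s * bessel_J 0 s + bessel_J 1 s * bessel_J 1 s" for s
  have dE: "(E has_real_derivative 2 * bessel_J 1 s * (D1 s - bessel_J 0 s)) (at s)" for s
  proof -
    have "(E has_real_derivative (- bessel_J 1 s * bessel_J 0 s + - bessel_J 1 s * bessel_J 0 s)
        + (D1 s * bessel_J 1 s + D1 s * bessel_J 1 s)) (at s)"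
      unfolding E_def[abs_def]
      by (intro DERIV_add DERIV_mult J0_deriv dJ1)
    moreover have "(- bessel_J 1 s * bessel_J 0 s + - bessel_J 1 s * bessel_J 0 s)
        + (D1 s * bessel_J 1 s + D1 s * bessel_J 1 s) = 2 * bessel_J 1 s * (D1 s - bessel_J 0 s)"
      by (simp add: algebra_simps)
    ultimately show ?thesis by simp
  qed
  have dEneg: "2 * bessel_J 1 s * (D1 s - bessel_J 0 s) \<le> 0" if "0 \<le> s" for s
  proof (cases "s = 0")
    case True then show ?thesis using bessel_at0(2)[of 0] by simp
  next
    case False
    then have sp: "s > 0" using that by simp
    have h: "s * D1 s - s * bessel_J 0 s = - bessel_J 1 s" using rel[of s] by simp
    have "s * (2 * bessel_J 1 s * (D1 s - bessel_J 0 s)) = 2 * bessel_J 1 s * (s * D1 s - s * bessel_J 0 s)"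
      by (simp add: algebra_simps)
    also have "\<dots> = - 2 * (bessel_J 1 s)^2" unfolding h by (simp add: power2_eq_square)
    finally have "s * (2 * bessel_J 1 s * (D1 s - bessel_J 0 s)) = - 2 * (bessel_J 1 s)^2" .
    also have "\<dots> \<le> 0" by simp
    finally show ?thesis using sp by (simp add: mult_le_0_iff)
  qed
  have Ele: "E s \<le> 1" if "0 \<le> s" for s
  proof -
    have "E s \<le> E 0"
      by (rule DERIV_nonpos_imp_nonincreasing[of 0 s E, OF that]) (use dE dEneg in blast)
    also have "E 0 = 1" unfolding E_def using bessel_at0(1) bessel_at0(2)[of 0] by simp
    finally show ?thesis .
  qed
  have pos: "\<bar>bessel_J 0 s\<bar> \<le> 1" if "0 \<le> s" for s
  proof -
    have "(bessel_J 0 s)^2 \<le> 1" using Ele[OF that] unfolding E_def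
      by (simp add: power2_eq_square) (smt (verit) zero_le_square)
    then show ?thesis by (simp add: abs_square_le_1)
  qed
  show ?thesis
  proof (cases "0 \<le> t")
    case True then show ?thesis by (rule pos)
  next
    case False
    then have "\<bar>bessel_J 0 (-t)\<bar> \<le> 1" by (intro pos) simp
    then show ?thesis using bessel_neg[of 0 t] by simp
  qed
qed

lemma bessel_bound_pos: "0 \<le> t \<Longrightarrow> \<bar>bessel_J m t\<bar> \<le> (t/2)^m / fact m"
proof (induction m arbitrary: t)
  case 0 then show ?case using J0_bound[of t] by simp
next
  case (Suc m)
  define G where "G s = s^(m+1) * bessel_J (m+1) s" for s
  define H where "H s = s^(2*m+2) / (2^(m+1) * fact (m+1))" for s :: real
  have dG: "(G has_real_derivative s^(m+1) * bessel_J m s) (at s)" for s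
    unfolding G_def[abs_def] by (rule G_deriv)
  have dH: "(H has_real_derivative s^(2*m+1) / (2^m * fact m)) (at s)" for s
  proof -
    have "(H has_real_derivative real (2*m+2) * s^(2*m+2-1) / (2^(m+1) * fact (m+1))) (at s)"
      unfolding H_def[abs_def] by (rule DERIV_cdivide) (metis DERIV_pow One_nat_def)
    moreover have "real (2*m+2) * s^(2*m+2-1) / (2^(m+1) * fact (m+1)) = s^(2*m+1) / (2^m * fact m)"
    proof -
      have "real (2*m+2) = 2 * (real m + 1)" by simp
      moreover have "(fact (m+1)::real) = (real m + 1) * fact m" by simp
      moreover have "2*m+2-1 = 2*m+1" by simp
      moreover have "real m + 1 \<noteq> 0" by (simp add: add_nonneg_eq_0_iff)
      ultimately show ?thesis
        using frac_aux2[of "real m + 1" "2^m" "fact m" "s^(2*m+1)"] by (simp add: ac_simps)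
    qed
    ultimately show ?thesis by simp
  qed
  have bnd: "\<bar>s^(m+1) * bessel_J m s\<bar> \<le> s^(2*m+1) / (2^m * fact m)" if "0 \<le> s" for s
  proof -
    have "\<bar>s^(m+1) * bessel_J m s\<bar> = s^(m+1) * \<bar>bessel_J m s\<bar>"
      using that by (simp add: abs_mult)
    also have "\<dots> \<le> s^(m+1) * ((s/2)^m / fact m)"
      using Suc.IH[OF that] that by (intro mult_left_mono) auto
    also have "\<dots> = s^(2*m+1) / (2^m * fact m)"
    proof -
      have ee: "2*m+1 = (m+1)+m" by simp
      have "s^(m+1) * s^m = s^(2*m+1)" unfolding ee by (rule power_add[symmetric])
      then show ?thesis by (simp add: power_divide field_simps)
    qed
    finally show ?thesis .
  qed
  have G0: "G 0 = 0" and H0: "H 0 = 0" unfolding G_def H_def by simp_all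
  have up: "G t \<le> H t"
  proof -
    have "(\<lambda>s. H s - G s) 0 \<le> (\<lambda>s. H s - G s) t"
    proof (rule DERIV_nonneg_imp_nondecreasing[OF Suc.prems])
      fix x :: real assume "0 \<le> x" "x \<le> t"
      show "\<exists>y. ((\<lambda>s. H s - G s) has_real_derivative y) (at x) \<and> 0 \<le> y"
        using DERIV_diff[OF dH dG, of x] bnd[OF \<open>0 \<le> x\<close>]
        by (intro exI[where x="x^(2*m+1)/(2^m*fact m) - x^(m+1)*bessel_J m x"] conjI) (simp_all add: abs_le_iff)
    qed
    then show ?thesis using G0 H0 by simp
  qed
  have lo: "- G t \<le> H t"
  proof -
    have "(\<lambda>s. H s + G s) 0 \<le> (\<lambda>s. H s + G s) t"
    proof (rule DERIV_nonneg_imp_nondecreasing[OF Suc.prems])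
      fix x :: real assume "0 \<le> x" "x \<le> t"
      show "\<exists>y. ((\<lambda>s. H s + G s) has_real_derivative y) (at x) \<and> 0 \<le> y"
        using DERIV_add[OF dH dG, of x] bnd[OF \<open>0 \<le> x\<close>]
        by (intro exI[where x="x^(2*m+1)/(2^m*fact m) + x^(m+1)*bessel_J m x"] conjI) (simp_all add: abs_le_iff)
    qed
    then show ?thesis using G0 H0 by simp
  qed
  show ?case
  proof (cases "t = 0")
    case True then show ?thesis using bessel_at0(2)[of m] by simp
  next
    case False
    then have tp: "t > 0" using Suc.prems by simp
    have "t^(m+1) * \<bar>bessel_J (Suc m) t\<bar> \<le> H t"
      using up lo tp unfolding G_def by (simp add: abs_mult abs_le_iff)
    also have "H t = t^(m+1) * ((t/2)^(Suc m) / fact (Suc m))"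
    proof -
      have ee: "2*m+2 = (m+1)+(m+1)" by simp
      have "t^(2*m+2) = t^(m+1) * t^(m+1)" unfolding ee by (rule power_add)
      then show ?thesis unfolding H_def by (simp add: power_divide)
    qed
    finally show ?thesis by (rule mult_left_le_imp_le) (use tp in simp)
  qed
qed

lemma bessel_bound: "\<bar>bessel_J m t\<bar> \<le> (\<bar>t\<bar>/2)^m / fact m"
proof (cases "0 \<le> t")
  case True then show ?thesis using bessel_bound_pos[OF True] by simp
next
  case False
  then have A: "\<bar>bessel_J m (-t)\<bar> \<le> (-t/2)^m / fact m" by (intro bessel_bound_pos) simp
  have B: "\<bar>bessel_J m (-t)\<bar> = \<bar>bessel_J m t\<bar>" unfolding bessel_neg by (simp add: abs_mult)
  have C: "-t = \<bar>t\<bar>" using False by simp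
  have D: "(-t/2)^m = (\<bar>t\<bar>/2)^m" by (simp only: C)
  show ?thesis using A unfolding B D .
qed



lemma cos_pow: "(2 * cos th)^m = (\<Sum>k\<le>m. real (m choose k) * cos ((real k - real (m - k)) * th))"
proof -
  have base: "complex_of_real (2 * cos th) = cis th + cis (-th)"
    by (simp add: complex_eq_iff)
  have "complex_of_real ((2 * cos th)^m) = (cis th + cis (-th))^m"
    by (simp add: base[symmetric])
  also have "\<dots> = (\<Sum>k\<le>m. of_nat (m choose k) * cis th ^ k * cis (-th) ^ (m - k))"
    by (rule binomial_ring)
  also have "\<dots> = (\<Sum>k\<le>m. of_nat (m choose k) * cis ((real k - real (m - k)) * th))"
  proof (rule sum.cong[OF refl])
    fix k
    have a: "cis th ^ k = cis (real k * th)" by (rule Complex.DeMoivre)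
    have b: "cis (-th) ^ (m - k) = cis (real (m - k) * (-th))" by (rule Complex.DeMoivre)
    have c: "real k * th + real (m - k) * (-th) = (real k - real (m - k)) * th" by (simp add: algebra_simps)
    have "cis th ^ k * cis (-th) ^ (m - k) = cis ((real k - real (m - k)) * th)"
      unfolding a b cis_mult c ..
    then show "of_nat (m choose k) * cis th ^ k * cis (-th) ^ (m - k) = of_nat (m choose k) * cis ((real k - real (m - k)) * th)"
      by (simp add: mult.assoc)
  qed
  finally have "Re (complex_of_real ((2 * cos th)^m)) = Re (\<Sum>k\<le>m. of_nat (m choose k) * cis ((real k - real (m - k)) * th))"
    by simp
  then show ?thesis by simp
qed

definition cc :: "nat \<Rightarrow> real" where "cc j = (if j = 0 then 1 else 2)"

lemma cos_pow_even:
  "(2 * cos th)^(2*n) = (\<Sum>j\<le>n. cc j * real ((2*n) choose (n - j)) * cos (2 * real j * th))"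
proof -
  define f where "f k = real ((2*n) choose k) * cos ((real k - real (2*n - k)) * th)" for k
  have split: "{..2*n} = {..<n} \<union> {n..2*n}" by auto
  have "(2 * cos th)^(2*n) = sum f {..2*n}" unfolding f_def by (rule cos_pow)
  also have "\<dots> = sum f {..<n} + sum f {n..2*n}"
    unfolding split by (rule sum.union_disjoint) auto
  also have "sum f {n..2*n} = (\<Sum>j\<le>n. f (n + j))"
  proof -
    have "{n..2*n} = (\<lambda>j. n + j) ` {..n}"
    proof
      show "{n..2*n} \<subseteq> (\<lambda>j. n + j) ` {..n}"
      proof
        fix x assume "x \<in> {n..2*n}"
        then show "x \<in> (\<lambda>j. n + j) ` {..n}" by (intro image_eqI[of _ _ "x - n"]) auto
      qed
    qed auto
    then show ?thesis by (simp add: sum.reindex)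
  qed
  also have "sum f {..<n} = (\<Sum>j<n. f (n - Suc j))"
    by (rule sum.nat_diff_reindex[symmetric])
  also have "(\<Sum>j\<le>n. f (n + j)) = (\<Sum>j\<le>n. real ((2*n) choose (n - j)) * cos (2 * real j * th))"
  proof (rule sum.cong[OF refl])
    fix j assume "j \<in> {..n}"
    then have jn: "j \<le> n" by simp
    have "(2*n) choose (n + j) = (2*n) choose (2*n - (n + j))"
      by (rule binomial_symmetric) (use jn in simp)
    also have "2*n - (n + j) = n - j" by simp
    finally have b: "(2*n) choose (n + j) = (2*n) choose (n - j)" .
    have "real (n + j) - real (2*n - (n + j)) = 2 * real j" using jn by (simp add: of_nat_diff)
    then show "f (n + j) = real ((2*n) choose (n - j)) * cos (2 * real j * th)"
      unfolding f_def b by simp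
  qed
  also have "(\<Sum>j<n. f (n - Suc j)) = (\<Sum>j<n. real ((2*n) choose (n - Suc j)) * cos (2 * real (Suc j) * th))"
  proof (rule sum.cong[OF refl])
    fix j assume "j \<in> {..<n}"
    then have jn: "j < n" by simp
    have "real (n - Suc j) - real (2*n - (n - Suc j)) = - (2 * real (Suc j))" using jn by (simp add: of_nat_diff)
    then show "f (n - Suc j) = real ((2*n) choose (n - Suc j)) * cos (2 * real (Suc j) * th)"
      unfolding f_def by (simp del: of_nat_Suc)
  qed
  also have "(\<Sum>j<n. real ((2*n) choose (n - Suc j)) * cos (2 * real (Suc j) * th))
      = (\<Sum>j\<le>n. (if j = 0 then 0 else 1) * (real ((2*n) choose (n - j)) * cos (2 * real j * th)))"
  proof -
    have "(\<Sum>j\<le>n. (if j = 0 then 0 else 1) * (real ((2*n) choose (n - j)) * cos (2 * real j * th)))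
        = (\<Sum>j<Suc n. (if j = 0 then 0 else 1) * (real ((2*n) choose (n - j)) * cos (2 * real j * th)))"
      by (simp add: lessThan_Suc_atMost)
    also have "\<dots> = (\<Sum>j<n. real ((2*n) choose (n - Suc j)) * cos (2 * real (Suc j) * th))"
      by (subst sum.lessThan_Suc_shift) simp
    finally show ?thesis by simp
  qed
  finally have eq: "(2 * cos th)^(2*n) = (\<Sum>j\<le>n. (if j = 0 then 0 else 1) * (real ((2*n) choose (n - j)) * cos (2 * real j * th)))
     + (\<Sum>j\<le>n. real ((2*n) choose (n - j)) * cos (2 * real j * th))" .
  have "(\<Sum>j\<le>n. cc j * real ((2*n) choose (n - j)) * cos (2 * real j * th))
     = (\<Sum>j\<le>n. (if j = 0 then 0 else 1) * (real ((2*n) choose (n - j)) * cos (2 * real j * th))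
          + real ((2*n) choose (n - j)) * cos (2 * real j * th))"
    by (rule sum.cong) (auto simp: cc_def)
  also have "\<dots> = (\<Sum>j\<le>n. (if j = 0 then 0 else 1) * (real ((2*n) choose (n - j)) * cos (2 * real j * th)))
     + (\<Sum>j\<le>n. real ((2*n) choose (n - j)) * cos (2 * real j * th))"
    by (rule sum.distrib)
  finally show ?thesis using eq by simp
qed

lemma cos_pow_odd:
  "(2 * cos th)^(2*n+1) = 2 * (\<Sum>j\<le>n. real ((2*n+1) choose (n - j)) * cos ((2 * real j + 1) * th))"
proof -
  define f where "f k = real ((2*n+1) choose k) * cos ((real k - real (2*n+1 - k)) * th)" for k
  have split: "{..2*n+1} = {..n} \<union> {n+1..2*n+1}" by auto
  have "(2 * cos th)^(2*n+1) = sum f {..2*n+1}" unfolding f_def by (rule cos_pow)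
  also have "\<dots> = sum f {..n} + sum f {n+1..2*n+1}"
    unfolding split by (rule sum.union_disjoint) auto
  also have "sum f {n+1..2*n+1} = (\<Sum>j\<le>n. f (n + 1 + j))"
  proof -
    have "{n+1..2*n+1} = (\<lambda>j. n + 1 + j) ` {..n}"
    proof
      show "{n+1..2*n+1} \<subseteq> (\<lambda>j. n + 1 + j) ` {..n}"
      proof
        fix x assume "x \<in> {n+1..2*n+1}"
        then show "x \<in> (\<lambda>j. n + 1 + j) ` {..n}" by (intro image_eqI[of _ _ "x - (n+1)"]) auto
      qed
    qed auto
    then show ?thesis by (simp only:) (subst sum.reindex, auto simp: inj_on_def)
  qed
  also have "sum f {..n} = (\<Sum>j<Suc n. f (Suc n - Suc j))"
    using sum.nat_diff_reindex[of f "Suc n"] unfolding lessThan_Suc_atMost by simp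
  also have "(\<Sum>j<Suc n. f (Suc n - Suc j)) = (\<Sum>j\<le>n. real ((2*n+1) choose (n - j)) * cos ((2 * real j + 1) * th))"
    unfolding lessThan_Suc_atMost
  proof (rule sum.cong[OF refl])
    fix j assume "j \<in> {..n}"
    then have jn: "j \<le> n" by simp
    have h1: "real (n - j) = real n - real j" using jn by (simp add: of_nat_diff)
    have h2: "real (2*n+1 - (n - j)) = real n + 1 + real j" using jn by (simp add: of_nat_diff)
    have e: "(real (n - j) - real (2*n+1 - (n - j))) * th = - ((2 * real j + 1) * th)"
      unfolding h1 h2 by (simp add: algebra_simps)
    have e2: "Suc n - Suc j = n - j" by simp
    show "f (Suc n - Suc j) = real ((2*n+1) choose (n - j)) * cos ((2 * real j + 1) * th)"
      unfolding f_def e2 e cos_minus ..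
  qed
  also have "(\<Sum>j\<le>n. f (n + 1 + j)) = (\<Sum>j\<le>n. real ((2*n+1) choose (n - j)) * cos ((2 * real j + 1) * th))"
  proof (rule sum.cong[OF refl])
    fix j assume "j \<in> {..n}"
    then have jn: "j \<le> n" by simp
    have "(2*n+1) choose (n + 1 + j) = (2*n+1) choose (2*n+1 - (n + 1 + j))"
      by (rule binomial_symmetric) (use jn in simp)
    also have "2*n+1 - (n + 1 + j) = n - j" by simp
    finally have b: "(2*n+1) choose (n + 1 + j) = (2*n+1) choose (n - j)" .
    have h2: "real (2*n+1 - (n + 1 + j)) = real n - real j" using jn by (simp add: of_nat_diff)
    have e: "(real (n + 1 + j) - real (2*n+1 - (n + 1 + j))) * th = (2 * real j + 1) * th"
      unfolding h2 by (simp add: algebra_simps)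
    show "f (n + 1 + j) = real ((2*n+1) choose (n - j)) * cos ((2 * real j + 1) * th)"
      unfolding f_def b e ..
  qed
  finally show ?thesis by simp
qed



lemma double_swap:
  fixes u :: "nat \<Rightarrow> nat \<Rightarrow> real" and p q B :: "nat \<Rightarrow> real"
  assumes bound: "\<And>j k. \<bar>u (k+j) j\<bar> \<le> p j * q k"
    and p: "summable p" and q: "summable q" and p0: "\<And>j. p j \<ge> 0" and q0: "\<And>k. q k \<ge> 0"
    and inner: "\<And>j. (\<lambda>k. u (k+j) j) sums B j"
    and outer: "(\<lambda>n. \<Sum>j\<le>n. u n j) sums C"
  shows "B sums C"
proof -
  define w where "w = (\<lambda>(j,k). u (k+j) j)"
  define M where "M = (\<lambda>(j,k). p j * q k)"
  have qhs: "(q has_sum suminf q) UNIV"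
    by (rule norm_summable_imp_has_sum) (use q q0 in \<open>auto intro: summable_sums\<close>)
  have Msum: "M summable_on Sigma UNIV (\<lambda>_. UNIV)"
  proof (rule summable_on_SigmaI[where g = "\<lambda>j. p j * suminf q"])
    show "((\<lambda>y. M (x, y)) has_sum p x * suminf q) UNIV" for x
      unfolding M_def using has_sum_cmult_right[OF qhs, of "p x"] by simp
    show "(\<lambda>j. p j * suminf q) summable_on UNIV"
      using summable_on_UNIV_nonneg_real_iff[of "\<lambda>j. p j * suminf q"] p p0 q0 q
      by (simp add: summable_mult2 suminf_nonneg)
    show "\<And>x y. x \<in> UNIV \<Longrightarrow> y \<in> UNIV \<Longrightarrow> 0 \<le> M (x, y)"
      unfolding M_def using p0 q0 by simp
  qed
  have wabs: "(\<lambda>x. norm (w x)) summable_on UNIV"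
  proof (rule Infinite_Sum.abs_summable_on_comparison_test)
    show "(\<lambda>x. norm (M x)) summable_on UNIV"
    proof -
      have "(\<lambda>x. norm (M x)) = M" using p0 q0 by (auto simp: M_def abs_mult intro!: ext)
      then show ?thesis using Msum by simp
    qed
    show "norm (w x) \<le> norm (M x)" for x
      using bound p0 q0 by (cases x) (simp add: w_def M_def abs_mult)
  qed
  then have wsum: "w summable_on UNIV" by (rule Infinite_Sum.abs_summable_summable)
  define S where "S = infsum w UNIV"
  have whs: "(w has_sum S) (Sigma UNIV (\<lambda>_. UNIV))"
    using wsum unfolding S_def by (simp add: has_sum_infsum)
  have inner_hs: "((\<lambda>k. w (j, k)) has_sum B j) UNIV" for j
  proof -
    have "summable (\<lambda>k. norm (u (k+j) j))"
      by (rule summable_comparison_test[OF _ summable_mult[OF q, of "p j"]]) (use bound in simp)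
    then show ?thesis unfolding w_def using inner[of j] by (simp add: norm_summable_imp_has_sum)
  qed
  have "(B has_sum S) UNIV" by (rule has_sum_Sigma'[OF whs]) (use inner_hs in simp)
  then have BS: "B sums S" by (rule has_sum_imp_sums)
  have "((\<lambda>(n,j). u n j) has_sum S) (Sigma UNIV (\<lambda>n. {..n}))"
  proof -
    have "(w has_sum S) (Sigma UNIV (\<lambda>_. UNIV)) = ((\<lambda>(n,j). u n j) has_sum S) (Sigma UNIV (\<lambda>n. {..n}))"
      by (rule has_sum_reindex_bij_witness[where j = "\<lambda>(j,k). (k+j, j)" and i = "\<lambda>(n,j). (j, n - j)"])
         (auto simp: w_def)
    then show ?thesis using whs by simp
  qed
  then have "((\<lambda>n. \<Sum>j\<le>n. u n j) has_sum S) UNIV"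
    by (rule has_sum_Sigma') (simp add: has_sum_finite)
  then have "(\<lambda>n. \<Sum>j\<le>n. u n j) sums S" by (rule has_sum_imp_sums)
  then have "S = C" using outer by (rule sums_unique2)
  then show ?thesis using BS by simp
qed



lemma bessel_sums: "(\<lambda>k. (-1)^k / (fact k * fact (k + m)) * (t/2)^(2*k+m)) sums bessel_J m t"
proof -
  have "(\<lambda>k. (-1)^k / (fact k * fact (k + m)) * (t/2)^(2*k+m)) = (\<lambda>k. bc m k * t^(2*k+m))"
    by (rule ext) (simp add: bc_def power_divide)
  then have "summable (\<lambda>k. (-1)^k / (fact k * fact (k + m)) * (t/2)^(2*k+m))"
    using bessel_deriv(1)[of m t] by simp
  then show ?thesis unfolding bessel_J_def by (rule summable_sums)
qed

lemma bterm_bound: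
  fixes t :: real
  assumes "j \<le> k + m"
  shows "\<bar>(-1)^k / (fact k * fact (k + m)) * (t/2)^(2*k+m)\<bar> \<le> ((\<bar>t\<bar>/2)^2)^k / fact k * ((\<bar>t\<bar>/2)^m / fact j)"
proof -
  have fj: "fact j \<le> (fact (k+m)::real)" using assms by (rule fact_mono)
  have "\<bar>(-1)^k / (fact k * fact (k + m)) * (t/2)^(2*k+m)\<bar> = (\<bar>t\<bar>/2)^(2*k+m) / (fact k * fact (k+m))"
    by (simp add: abs_mult power_abs)
  also have "\<dots> \<le> (\<bar>t\<bar>/2)^(2*k+m) / (fact k * fact j)"
    by (intro divide_left_mono mult_left_mono fj) (auto intro: mult_pos_pos)
  also have "\<dots> = ((\<bar>t\<bar>/2)^2)^k / fact k * ((\<bar>t\<bar>/2)^m / fact j)"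
    by (simp add: power_add power_mult)
  finally show ?thesis .
qed

lemma sum_exp2: "summable (\<lambda>k. ((z::real)^2)^k / fact k)"
  using summable_exp[of "z^2"] by (simp add: divide_inverse mult.commute)

lemma binom_fact_div: "k \<le> N \<Longrightarrow> real (N choose k) / fact N = 1 / (fact k * fact (N - k))"
  by (simp add: binomial_fact)

lemma jacobi_cos:
  assumes "x \<in> {-1..1}"
  shows "(\<lambda>j. cc j * (-1)^j * bessel_J (2*j) t * cheb_T (2*j) x) sums cos (t*x)"
proof -
  define th where "th = arccos x"
  have cth: "cos th = x" unfolding th_def using assms by (simp add: cos_arccos)
  have T: "cheb_T m x = cos (real m * th)" for m unfolding cheb_T_def th_def ..
  define u where "u n j = (-1)^n / fact (2*n) * (t/2)^(2*n) * (cc j * real ((2*n) choose (n - j)) * cos (2 * real j * th))" for n j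
  show ?thesis
  proof (rule double_swap[where u = u and p = "\<lambda>j. 2 * (((\<bar>t\<bar>/2)^2)^j / fact j)" and q = "\<lambda>k. ((\<bar>t\<bar>/2)^2)^k / fact k"])
    fix j k
    have e1: "u (k+j) j = (cc j * (-1)^j * cos (2 * real j * th)) * ((-1)^k / (fact k * fact (k + 2*j)) * (t/2)^(2*k+2*j))"
    proof -
      have a: "real ((2*(k+j)) choose k) / fact (2*(k+j)) = 1 / (fact k * fact (k + 2*j))"
        using binom_fact_div[of k "2*(k+j)"] by (simp add: algebra_simps)
      have b: "(-1::real)^(k+j) = (-1)^k * (-1)^j" by (simp add: power_add)
      have c: "2*(k+j) = 2*k+2*j" by simp
      show ?thesis unfolding u_def using a unfolding b c by (simp add: field_simps)
    qed
    have "\<bar>u (k+j) j\<bar> = \<bar>cc j * (-1)^j * cos (2 * real j * th)\<bar> * \<bar>(-1)^k / (fact k * fact (k + 2*j)) * (t/2)^(2*k+2*j)\<bar>"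
      unfolding e1 by (rule abs_mult)
    also have "\<dots> \<le> 2 * (((\<bar>t\<bar>/2)^2)^k / fact k * ((\<bar>t\<bar>/2)^(2*j) / fact j))"
    proof (rule mult_mono)
      show "\<bar>cc j * (-1)^j * cos (2 * real j * th)\<bar> \<le> 2"
        by (simp add: cc_def abs_mult)
      show "\<bar>(-1)^k / (fact k * fact (k + 2*j)) * (t/2)^(2*k+2*j)\<bar> \<le> ((\<bar>t\<bar>/2)^2)^k / fact k * ((\<bar>t\<bar>/2)^(2*j) / fact j)"
        by (rule bterm_bound) simp
    qed simp_all
    also have "\<dots> = 2 * (((\<bar>t\<bar>/2)^2)^j / fact j) * (((\<bar>t\<bar>/2)^2)^k / fact k)"
      unfolding power_mult by (simp only: ac_simps)
    finally show "\<bar>u (k+j) j\<bar> \<le> 2 * (((\<bar>t\<bar>/2)^2)^j / fact j) * (((\<bar>t\<bar>/2)^2)^k / fact k)" .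
  next
    show "summable (\<lambda>j. 2 * (((\<bar>t\<bar>/2)^2)^j / fact j))" by (intro summable_mult sum_exp2)
    show "summable (\<lambda>k. ((\<bar>t\<bar>/2)^2)^k / fact k)" by (rule sum_exp2)
    show "\<And>j. 0 \<le> 2 * (((\<bar>t\<bar>/2)^2)^j / fact j)" by simp
    show "\<And>k. 0 \<le> ((\<bar>t\<bar>/2)^2)^k / (fact k :: real)" by simp
  next
    fix j
    have S1: "(\<lambda>k. (cc j * (-1)^j * cos (2 * real j * th)) * ((-1)^k / (fact k * fact (k + 2*j)) * (t/2)^(2*k+2*j)))
        sums ((cc j * (-1)^j * cos (2 * real j * th)) * bessel_J (2*j) t)"
      by (rule sums_mult) (rule bessel_sums)
    have E: "u (k+j) j = (cc j * (-1)^j * cos (2 * real j * th)) * ((-1)^k / (fact k * fact (k + 2*j)) * (t/2)^(2*k+2*j))" for k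
    proof -
      have a: "real ((2*(k+j)) choose k) / fact (2*(k+j)) = 1 / (fact k * fact (k + 2*j))"
        using binom_fact_div[of k "2*(k+j)"] by (simp add: algebra_simps)
      have b: "(-1::real)^(k+j) = (-1)^k * (-1)^j" by (simp add: power_add)
      have c: "2*(k+j) = 2*k+2*j" by simp
      show ?thesis unfolding u_def using a unfolding b c by (simp add: field_simps)
    qed
    have E2: "cc j * (-1)^j * bessel_J (2*j) t * cheb_T (2*j) x = (cc j * (-1)^j * cos (2 * real j * th)) * bessel_J (2*j) t"
      unfolding T by simp
    have E3: "(\<lambda>k. u (k+j) j) = (\<lambda>k. (cc j * (-1)^j * cos (2 * real j * th)) * ((-1)^k / (fact k * fact (k + 2*j)) * (t/2)^(2*k+2*j)))"
      by (rule ext) (rule E)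
    show "(\<lambda>k. u (k+j) j) sums (cc j * (-1)^j * bessel_J (2*j) t * cheb_T (2*j) x)"
      unfolding E2 E3 by (rule S1)
  next
    have "(\<Sum>j\<le>n. u n j) = (-1)^n / fact (2*n) * (t*x)^(2*n)" for n
    proof -
      have "(\<Sum>j\<le>n. u n j) = (-1)^n / fact (2*n) * (t/2)^(2*n) * (2 * cos th)^(2*n)"
        unfolding u_def cos_pow_even by (rule sum_distrib_left[symmetric])
      also have "\<dots> = (-1)^n / fact (2*n) * (t*x)^(2*n)"
      proof -
        have "t*x = (t/2)*(2*x)" by simp
        then have tx: "(t*x)^(2*n) = (t/2)^(2*n) * (2*x)^(2*n)" by (simp only: power_mult_distrib)
        show ?thesis unfolding cth tx by (simp only: mult.assoc)
      qed
      finally show ?thesis .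
    qed
    then show "(\<lambda>n. \<Sum>j\<le>n. u n j) sums cos (t*x)" using cos_paired[of "t*x"] by simp
  qed
qed

lemma alg_aux: "(C::real) / F = 1 / D \<Longrightarrow> (a * b) / F * P * (z * (C * c)) = (z * b * c) * (a / D * P)"
proof -
  assume h: "C / F = 1 / D"
  have "(a * b) / F * P * (z * (C * c)) = (z * b * c) * (a * P) * (C / F)"
    by (simp add: divide_inverse ac_simps)
  also have "\<dots> = (z * b * c) * (a / D * P)" unfolding h by (simp add: divide_inverse ac_simps)
  finally show ?thesis .
qed

lemma jacobi_sin:
  assumes "x \<in> {-1..1}"
  shows "(\<lambda>j. 2 * (-1)^j * bessel_J (2*j+1) t * cheb_T (2*j+1) x) sums sin (t*x)"
proof -
  define th where "th = arccos x"
  have cth: "cos th = x" unfolding th_def using assms by (simp add: cos_arccos)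
  have T: "cheb_T m x = cos (real m * th)" for m unfolding cheb_T_def th_def ..
  define u where "u n j = (-1)^n / fact (2*n+1) * (t/2)^(2*n+1) * (2 * (real ((2*n+1) choose (n - j)) * cos ((2 * real j + 1) * th)))" for n j
  have E: "u (k+j) j = (2 * (-1)^j * cos ((2 * real j + 1) * th)) * ((-1)^k / (fact k * fact (k + (2*j+1))) * (t/2)^(2*k+(2*j+1)))" for k j
  proof -
    have a: "real ((2*k+(2*j+1)) choose k) / fact (2*k+(2*j+1)) = 1 / (fact k * fact (k + (2*j+1)))"
      using binom_fact_div[of k "2*k+(2*j+1)"] by simp
    have b: "(-1::real)^(k+j) = (-1)^k * (-1)^j" by (simp add: power_add)
    have c: "2*(k+j)+1 = 2*k+(2*j+1)" by simp
    have d: "k + j - j = k" by simp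
    show ?thesis unfolding u_def d b c by (rule alg_aux[OF a])
  qed
  show ?thesis
  proof (rule double_swap[where u = u and p = "\<lambda>j. 2 * (\<bar>t\<bar>/2) * (((\<bar>t\<bar>/2)^2)^j / fact j)" and q = "\<lambda>k. ((\<bar>t\<bar>/2)^2)^k / fact k"])
    fix j k
    have "\<bar>u (k+j) j\<bar> = \<bar>2 * (-1)^j * cos ((2 * real j + 1) * th)\<bar> * \<bar>(-1)^k / (fact k * fact (k + (2*j+1))) * (t/2)^(2*k+(2*j+1))\<bar>"
      unfolding E by (rule abs_mult)
    also have "\<dots> \<le> 2 * (((\<bar>t\<bar>/2)^2)^k / fact k * ((\<bar>t\<bar>/2)^(2*j+1) / fact j))"
    proof (rule mult_mono)
      show "\<bar>2 * (-1)^j * cos ((2 * real j + 1) * th)\<bar> \<le> 2"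
        by (simp add: abs_mult)
      show "\<bar>(-1)^k / (fact k * fact (k + (2*j+1))) * (t/2)^(2*k+(2*j+1))\<bar> \<le> ((\<bar>t\<bar>/2)^2)^k / fact k * ((\<bar>t\<bar>/2)^(2*j+1) / fact j)"
        by (rule bterm_bound) simp
    qed simp_all
    also have "\<dots> = 2 * (\<bar>t\<bar>/2) * (((\<bar>t\<bar>/2)^2)^j / fact j) * (((\<bar>t\<bar>/2)^2)^k / fact k)"
    proof -
      have "(\<bar>t\<bar>/2)^(2*j+1) = (\<bar>t\<bar>/2) * ((\<bar>t\<bar>/2)^2)^j" by (simp only: Suc_eq_plus1[symmetric] power_Suc power_mult)
      then show ?thesis by (simp only: ac_simps times_divide_eq_right times_divide_eq_left)
    qed
    finally show "\<bar>u (k+j) j\<bar> \<le> 2 * (\<bar>t\<bar>/2) * (((\<bar>t\<bar>/2)^2)^j / fact j) * (((\<bar>t\<bar>/2)^2)^k / fact k)" .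
  next
    show "summable (\<lambda>j. 2 * (\<bar>t\<bar>/2) * (((\<bar>t\<bar>/2)^2)^j / fact j))" by (intro summable_mult sum_exp2)
    show "summable (\<lambda>k. ((\<bar>t\<bar>/2)^2)^k / fact k)" by (rule sum_exp2)
    show "\<And>j. 0 \<le> 2 * (\<bar>t\<bar>/2) * (((\<bar>t\<bar>/2)^2)^j / fact j)" by simp
    show "\<And>k. 0 \<le> ((\<bar>t\<bar>/2)^2)^k / (fact k :: real)" by simp
  next
    fix j
    have S1: "(\<lambda>k. (2 * (-1)^j * cos ((2 * real j + 1) * th)) * ((-1)^k / (fact k * fact (k + (2*j+1))) * (t/2)^(2*k+(2*j+1))))
        sums ((2 * (-1)^j * cos ((2 * real j + 1) * th)) * bessel_J (2*j+1) t)"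
      by (rule sums_mult) (rule bessel_sums)
    have rr: "real (2*j+1) = 2 * real j + 1" by simp
    have E2: "2 * (-1)^j * bessel_J (2*j+1) t * cheb_T (2*j+1) x = (2 * (-1)^j * cos ((2 * real j + 1) * th)) * bessel_J (2*j+1) t"
      unfolding T rr by (simp only: ac_simps)
    have E3: "(\<lambda>k. u (k+j) j) = (\<lambda>k. (2 * (-1)^j * cos ((2 * real j + 1) * th)) * ((-1)^k / (fact k * fact (k + (2*j+1))) * (t/2)^(2*k+(2*j+1))))"
      by (rule ext) (rule E)
    show "(\<lambda>k. u (k+j) j) sums (2 * (-1)^j * bessel_J (2*j+1) t * cheb_T (2*j+1) x)"
      unfolding E2 E3 by (rule S1)
  next
    have "(\<Sum>j\<le>n. u n j) = (-1)^n / fact (2*n+1) * (t*x)^(2*n+1)" for n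
    proof -
      have "(\<Sum>j\<le>n. u n j) = (-1)^n / fact (2*n+1) * (t/2)^(2*n+1) * (\<Sum>j\<le>n. 2 * (real ((2*n+1) choose (n - j)) * cos ((2 * real j + 1) * th)))"
        unfolding u_def by (rule sum_distrib_left[symmetric])
      also have "(\<Sum>j\<le>n. 2 * (real ((2*n+1) choose (n - j)) * cos ((2 * real j + 1) * th))) = (2 * cos th)^(2*n+1)"
        unfolding cos_pow_odd by (rule sum_distrib_left[symmetric])
      also have "(-1)^n / fact (2*n+1) * (t/2)^(2*n+1) * (2 * cos th)^(2*n+1) = (-1)^n / fact (2*n+1) * (t*x)^(2*n+1)"
      proof -
        have "t*x = (t/2)*(2*x)" by simp
        then have tx: "(t*x)^(2*n+1) = (t/2)^(2*n+1) * (2*x)^(2*n+1)" by (simp only: power_mult_distrib)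
        show ?thesis unfolding cth tx by (simp only: mult.assoc)
      qed
      finally show ?thesis .
    qed
    then show "(\<lambda>n. \<Sum>j\<le>n. u n j) sums sin (t*x)" using sin_paired[of "t*x"] by simp
  qed
qed



lemma xlnx_convex:
  fixes x y :: real
  assumes "0 < x" "x \<le> y"
  shows "(y - x) * (1 + ln x) \<le> y * ln y - x * ln x"
proof -
  have y: "0 < y" using assms by linarith
  have "ln (x / y) \<le> x / y - 1" using assms y by (intro ln_le_minus_one) simp
  then have "ln x - ln y \<le> x / y - 1" using assms y by (simp add: ln_div)
  then have "y * (ln x - ln y) \<le> y * (x / y - 1)" using y by (intro mult_left_mono) auto
  then have "y * (ln x - ln y) \<le> x - y" using y by (simp add: algebra_simps)
  then show ?thesis by (simp add: algebra_simps)
qed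

lemma phi_decr:
  fixes \<tau> x y :: real
  assumes "0 < \<tau>" "\<tau> \<le> x" "x \<le> y"
  shows "y * ln (\<tau> / y) \<le> x * ln (\<tau> / x) - (y - x)"
proof -
  have x: "0 < x" using assms by linarith
  have y: "0 < y" using assms by linarith
  have c: "(y - x) * (1 + ln x) \<le> y * ln y - x * ln x" by (rule xlnx_convex[OF x assms(3)])
  have l: "ln \<tau> \<le> ln x" using assms x by simp
  have "(y - x) * ln \<tau> \<le> (y - x) * ln x" using l assms by (intro mult_left_mono) auto
  then show ?thesis using c assms x y by (simp add: ln_div algebra_simps)
qed

lemma phi_strict:
  fixes \<tau> x y :: real
  assumes "0 < \<tau>" "\<tau> \<le> x" "x < y"
  shows "y * ln (\<tau> / y) < x * ln (\<tau> / x)"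
  using phi_decr[OF assms(1,2) order.strict_implies_order[OF assms(3)]] assms(3) by simp

lemma r_fun_props:
  assumes tau: "0 < \<tau>" and eta: "0 < \<eta>" "\<eta> < 1"
  shows "\<tau> < r_fun \<tau> \<eta> \<and> \<eta> = exp (r_fun \<tau> \<eta> * ln (\<tau> / r_fun \<tau> \<eta>))"
proof -
  define P where "P r = (\<tau> < r \<and> \<eta> = (\<tau> / r) powr r)" for r
  define g where "g x = exp (x * ln (\<tau> / x))" for x
  have Pg: "P r \<longleftrightarrow> \<tau> < r \<and> \<eta> = g r" for r
    unfolding P_def g_def using tau by (auto simp: powr_def)
  define X where "X = max (exp 1 * \<tau>) (1 - ln \<eta>)"
  have X1: "exp 1 * \<tau> \<le> X" and X2: "1 - ln \<eta> \<le> X" unfolding X_def by auto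
  have "1 * \<tau> < exp 1 * \<tau>" by (rule mult_strict_right_mono) (use tau in auto)
  then have tX: "\<tau> < X" using X1 by simp
  have gX: "g X < \<eta>"
  proof -
    have Xp: "0 < X" using tX tau by simp
    have "\<tau> / X \<le> \<tau> / (exp 1 * \<tau>)" by (rule divide_left_mono) (use X1 tau Xp in auto)
    also have "\<dots> = exp (-1)" using tau by (simp add: exp_minus divide_inverse)
    finally have "\<tau> / X \<le> exp (-1)" .
    then have "ln (\<tau> / X) \<le> ln (exp (-1))" using Xp tau by (subst ln_le_cancel_iff) auto
    then have "ln (\<tau> / X) \<le> -1" by simp
    then have "X * ln (\<tau> / X) \<le> X * (-1)" using Xp by (intro mult_left_mono) auto
    then have "X * ln (\<tau> / X) \<le> - X" by simp
    also have "\<dots> < ln \<eta>" using X2 by simp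
    finally have "X * ln (\<tau> / X) < ln \<eta>" .
    then show ?thesis unfolding g_def using eta by (metis exp_less_mono exp_ln)
  qed
  have gt: "g \<tau> = 1" unfolding g_def using tau by simp
  have cont: "\<forall>x. \<tau> \<le> x \<and> x \<le> X \<longrightarrow> isCont g x"
    unfolding g_def using tau by (auto intro!: continuous_intros)
  obtain r where r: "\<tau> \<le> r" "r \<le> X" "g r = \<eta>"
    using IVT2[of g X \<eta> \<tau>, OF less_imp_le[OF gX] _ less_imp_le[OF tX] cont] gt eta by auto
  have "r \<noteq> \<tau>" using r gt eta by auto
  then have Pr: "P r" unfolding Pg using r by simp
  have uniq: "s = r" if "P s" for s
  proof -
    have s: "\<tau> < s" "g s = \<eta>" using that unfolding Pg by auto
    have rr: "\<tau> < r" using Pr unfolding Pg by simp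
    show ?thesis
    proof (rule ccontr)
      assume "s \<noteq> r"
      then consider "s < r" | "r < s" by linarith
      then show False
      proof cases
        case 1
        then have "r * ln (\<tau>/r) < s * ln (\<tau>/s)" by (intro phi_strict) (use tau s in auto)
        then show False using s r unfolding g_def by (metis exp_inj_iff order_less_irrefl)
      next
        case 2
        then have "s * ln (\<tau>/s) < r * ln (\<tau>/r)" by (intro phi_strict) (use tau rr in auto)
        then show False using s r unfolding g_def by (metis exp_inj_iff order_less_irrefl)
      qed
    qed
  qed
  have th: "P (THE r. P r)" by (rule theI[of P r, OF Pr uniq])
  have "r_fun \<tau> \<eta> = (THE r. P r)" unfolding r_fun_def P_def ..
  then have "P (r_fun \<tau> \<eta>)" using th by simp
  then show ?thesis unfolding Pg g_def by simp
qed

lemma one_plus_inv_pow: "0 < m \<Longrightarrow> (1 + 1 / real m)^m \<le> exp 1"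
proof -
  assume m: "0 < m"
  have "(1 + 1 / real m)^m \<le> exp (1 / real m)^m"
    by (intro power_mono) (auto simp: add.commute)
  also have "\<dots> = exp 1" using m by (simp add: exp_of_nat_mult[symmetric])
  finally show ?thesis .
qed

lemma fact_lower: "2 \<le> m \<Longrightarrow> exp 2 / 2 * (real m / exp 1)^m \<le> fact m"
proof (induction m rule: dec_induct)
  case base
  have ee: "exp 2 = exp 1 * (exp 1::real)" by (metis exp_add one_add_one)
  have "exp 2 / 2 * (2 / exp 1)^2 = (2::real)"
    unfolding ee by (simp add: power2_eq_square field_simps)
  then show ?case by simp
next
  case (step m)
  have m: "0 < m" using step by simp
  have e: "exp 1 * real m ^ m \<ge> (real m + 1)^m"
  proof -
    have "(real m + 1)^m = real m ^ m * (1 + 1 / real m)^m"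
      using m by (simp add: power_mult_distrib[symmetric] field_simps)
    also have "\<dots> \<le> real m ^ m * exp 1" by (intro mult_left_mono one_plus_inv_pow m) simp
    finally show ?thesis by (simp add: mult.commute)
  qed
  have "exp 2 / 2 * (real (Suc m) / exp 1)^(Suc m) = exp 2 / 2 * ((real m + 1)^m * (real m + 1) / exp 1 ^ Suc m)"
    by (simp add: field_simps)
  also have "\<dots> \<le> exp 2 / 2 * ((exp 1 * real m ^ m) * (real m + 1) / exp 1 ^ Suc m)"
    by (intro mult_left_mono divide_right_mono mult_right_mono e) auto
  also have "\<dots> = (real m + 1) * (exp 2 / 2 * (real m / exp 1)^m)"
    by (simp add: power_divide field_simps)
  also have "\<dots> \<le> (real m + 1) * fact m" by (intro mult_left_mono step.IH) auto
  also have "\<dots> = fact (Suc m)" by simp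
  finally show ?case .
qed

lemma term_bound:
  fixes a r \<eta> :: real
  assumes a: "0 < a" and r: "exp 1 * a < r" and eta: "\<eta> = exp (r * ln (exp 1 * a / r))"
    and m: "2 \<le> m" and rm: "r + 2 * real j \<le> real m"
  shows "a^m / fact m \<le> 2 / exp 2 * \<eta> * exp (- 2 * real j)"
proof -
  define \<tau> where "\<tau> = exp 1 * a"
  have tau: "0 < \<tau>" unfolding \<tau>_def using a by simp
  have mpos: "0 < real m" using m by simp
  have fl: "exp 2 / 2 * (real m / exp 1)^m \<le> fact m" by (rule fact_lower[OF m])
  have pos: "0 < exp 2 / 2 * (real m / exp 1)^m" using mpos by simp
  have "a^m / fact m \<le> a^m / (exp 2 / 2 * (real m / exp 1)^m)"
    by (rule divide_left_mono[OF fl]) (use a pos in auto)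
  also have "\<dots> = 2 / exp 2 * (\<tau> / real m)^m"
    unfolding \<tau>_def using mpos by (simp add: power_divide power_mult_distrib field_simps)
  also have "\<dots> = 2 / exp 2 * exp (real m * ln (\<tau> / real m))"
    using tau mpos by (simp add: powr_realpow[symmetric] powr_def)
  also have "\<dots> \<le> 2 / exp 2 * exp (r * ln (\<tau> / r) - (real m - r))"
  proof (intro mult_left_mono)
    have "real m * ln (\<tau> / real m) \<le> r * ln (\<tau> / r) - (real m - r)"
      by (rule phi_decr) (use tau r rm in \<open>auto simp: \<tau>_def\<close>)
    then show "exp (real m * ln (\<tau> / real m)) \<le> exp (r * ln (\<tau> / r) - (real m - r))" by simp
  qed simp
  also have "\<dots> = 2 / exp 2 * (\<eta> * exp (- (real m - r)))"
  proof -
    have "exp (r * ln (\<tau> / r) - (real m - r)) = exp (r * ln (\<tau> / r)) * exp (- (real m - r))"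
      by (simp only: diff_conv_add_uminus exp_add)
    then show ?thesis unfolding eta \<tau>_def by (simp only:)
  qed
  also have "\<dots> \<le> 2 / exp 2 * (\<eta> * exp (- 2 * real j))"
  proof (intro mult_left_mono)
    show "exp (- (real m - r)) \<le> exp (- 2 * real j)" using rm by simp
    show "0 \<le> \<eta>" unfolding eta by simp
  qed simp
  finally show ?thesis by (simp only: mult.assoc)
qed



lemma tail_bound:
  fixes b :: "nat \<Rightarrow> real"
  assumes L: "b sums L" and B: "\<And>j. \<bar>b (j+N)\<bar> \<le> C * q^j" and q: "0 \<le> q" "q < 1"
  shows "\<bar>L - (\<Sum>i<N. b i)\<bar> \<le> C / (1 - q)"
proof -
  have sb: "summable b" using L by (rule sums_summable)
  have eq: "(\<Sum>j. b (j+N)) = L - (\<Sum>i<N. b i)"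
    using suminf_minus_initial_segment[OF sb, of N] L by (simp add: sums_iff)
  have sg: "summable (\<lambda>j. C * q^j)" by (intro summable_mult summable_geometric) (use q in simp)
  have sa: "summable (\<lambda>j. \<bar>b (j+N)\<bar>)"
    by (rule summable_rabs_comparison_test[OF _ sg]) (use B in blast)
  have "\<bar>\<Sum>j. b (j+N)\<bar> \<le> (\<Sum>j. \<bar>b (j+N)\<bar>)" by (rule summable_rabs[OF sa])
  also have "\<dots> \<le> (\<Sum>j. C * q^j)" by (rule suminf_le[OF B sa sg])
  also have "\<dots> = C / (1 - q)"
    using suminf_mult[OF summable_geometric[of q], of C] suminf_geometric[of q] q by simp
  finally show ?thesis unfolding eq .
qed

lemma cheb_abs: "\<bar>cheb_T n x\<bar> \<le> 1"
  unfolding cheb_T_def by (rule abs_cos_le_one)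

theorem mainTheorem16:
  fixes t \<epsilon> :: real and R :: nat
  assumes "t \<noteq> 0" and "0 < \<epsilon>" and "\<epsilon> < 1 / exp 1"
    and "R = nat \<lfloor>r_fun (exp 1 * \<bar>t\<bar> / 2) (5 / 4 * \<epsilon>) / 2\<rfloor>"
  shows "(SUP x\<in>{-1..1}. \<bar>cos (t * x) - (bessel_J 0 t
            + 2 * (\<Sum>k=1..R. (-1) ^ k * bessel_J (2 * k) t * cheb_T (2 * k) x))\<bar>) \<le> \<epsilon> \<and>
         (SUP x\<in>{-1..1}. \<bar>sin (t * x)
            - 2 * (\<Sum>k=0..R. (-1) ^ k * bessel_J (2 * k + 1) t * cheb_T (2 * k + 1) x)\<bar>) \<le> \<epsilon>"
proof -
  define a where "a = \<bar>t\<bar> / 2"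
  define \<tau> where "\<tau> = exp 1 * \<bar>t\<bar> / 2"
  define \<eta> where "\<eta> = 5 / 4 * \<epsilon>"
  define r where "r = r_fun \<tau> \<eta>"
  have a: "0 < a" unfolding a_def using assms(1) by simp
  have tau_a: "\<tau> = exp 1 * a" unfolding \<tau>_def a_def by simp
  have tau: "0 < \<tau>" unfolding tau_a using a by simp
  have h32: "-(exp 1 - 5837465777 / 2147483648) \<le> inverse (2^32::real)" using e_approx_32 abs_le_iff by blast
  have e2: "exp 1 \<ge> (2.7::real)" using h32 by simp
  have e1: "exp 1 > (2::real)" using e2 by linarith
  have eta: "0 < \<eta>" "\<eta> < 1"
  proof -
    show "0 < \<eta>" unfolding \<eta>_def using assms(2) by simp
    have "1 / exp 1 < 1 / (2::real)" by (rule divide_strict_left_mono) (use e1 in auto)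
    then have "\<epsilon> < 1/2" using assms(3) by linarith
    then show "\<eta> < 1" unfolding \<eta>_def by simp
  qed
  note rp = r_fun_props[OF tau eta]
  have r: "\<tau> < r" and reta: "\<eta> = exp (r * ln (\<tau> / r))" using rp unfolding r_def by auto
  have R: "R = nat \<lfloor>r / 2\<rfloor>" unfolding assms(4) r_def \<tau>_def \<eta>_def ..
  have rR: "r \<le> 2 * real R + 2"
  proof -
    have "0 \<le> \<lfloor>r / 2\<rfloor>" using r tau by simp
    then have "real R = of_int \<lfloor>r / 2\<rfloor>" unfolding R by simp
    moreover have "r / 2 < of_int \<lfloor>r / 2\<rfloor> + 1" by linarith
    ultimately show ?thesis by linarith
  qed
  have ea: "exp 1 * a < r" using r unfolding tau_a .
  have reta': "\<eta> = exp (r * ln (exp 1 * a / r))" using reta unfolding tau_a .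
  define q where "q = exp (-2::real)"
  define C where "C = 4 / exp 2 * \<eta>"
  have q: "0 \<le> q" "q < 1" unfolding q_def by auto
  have final: "C / (1 - q) \<le> \<epsilon>"
  proof -
    have "exp 2 = exp 1 * (exp 1 :: real)" by (metis exp_add one_add_one)
    moreover have "(2.7::real) * 2.7 \<le> exp 1 * exp 1" by (rule mult_mono) (use e2 in auto)
    ultimately have ee: "exp 2 \<ge> (7::real)" by simp
    have "C / (1 - q) = 4 * \<eta> / (exp 2 - 1)"
      unfolding C_def q_def by (simp add: exp_minus field_simps)
    also have "\<dots> = 5 * \<epsilon> / (exp 2 - 1)" unfolding \<eta>_def by simp
    also have "\<dots> \<le> \<epsilon>" using ee assms(2) by (simp add: divide_le_eq)
    finally show ?thesis .
  qed
  have termb: "\<bar>c * bessel_J m t * T\<bar> \<le> C * q^j"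
    if c: "\<bar>c\<bar> \<le> 2" and T: "\<bar>T\<bar> \<le> 1" and m: "2 \<le> m" and rm: "r + 2 * real j \<le> real m" for c m T j
  proof -
    have "\<bar>c * bessel_J m t * T\<bar> = \<bar>c\<bar> * \<bar>bessel_J m t\<bar> * \<bar>T\<bar>" by (simp add: abs_mult)
    also have "\<dots> \<le> 2 * (a^m / fact m) * 1"
    proof (intro mult_mono)
      show "\<bar>bessel_J m t\<bar> \<le> a^m / fact m" unfolding a_def by (rule bessel_bound)
    qed (use c T a in auto)
    also have "\<dots> \<le> 2 * (2 / exp 2 * \<eta> * exp (- 2 * real j))"
      using term_bound[OF a ea reta' m rm] by simp
    also have "exp (- 2 * real j) = q^j" unfolding q_def by (simp add: exp_of_nat_mult[symmetric] mult.commute)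
    also have "2 * (2 / exp 2 * \<eta> * q^j) = C * q^j" unfolding C_def by simp
    finally show ?thesis .
  qed
  have cosb: "\<bar>cos (t * x) - (bessel_J 0 t
            + 2 * (\<Sum>k=1..R. (-1) ^ k * bessel_J (2 * k) t * cheb_T (2 * k) x))\<bar> \<le> \<epsilon>" if x: "x \<in> {-1..1}" for x
  proof -
    define b where "b j = cc j * (-1)^j * bessel_J (2*j) t * cheb_T (2*j) x" for j
    have bs: "b sums cos (t*x)" unfolding b_def by (rule jacobi_cos[OF x])
    have ps: "(\<Sum>i<Suc R. b i) = bessel_J 0 t + 2 * (\<Sum>k=1..R. (-1) ^ k * bessel_J (2 * k) t * cheb_T (2 * k) x)"
    proof -
      have "(\<Sum>i<Suc R. b i) = b 0 + (\<Sum>i<R. b (Suc i))" by (rule sum.lessThan_Suc_shift)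
      also have "b 0 = bessel_J 0 t" unfolding b_def cc_def cheb_T_def by simp
      also have "(\<Sum>i<R. b (Suc i)) = (\<Sum>i<R. 2 * ((-1) ^ Suc i * bessel_J (2 * Suc i) t * cheb_T (2 * Suc i) x))"
        unfolding b_def cc_def by (simp add: mult.assoc)
      also have "\<dots> = 2 * (\<Sum>k=1..R. (-1) ^ k * bessel_J (2 * k) t * cheb_T (2 * k) x)"
        by (simp add: sum.atLeast1_atMost_eq sum_distrib_left)
      finally show ?thesis .
    qed
    have "\<bar>cos (t*x) - (\<Sum>i<Suc R. b i)\<bar> \<le> C / (1 - q)"
    proof (rule tail_bound[OF bs _ q])
      fix j
      have "\<bar>b (j + Suc R)\<bar> = \<bar>cc (j + Suc R) * bessel_J (2*(j + Suc R)) t * ((-1)^(j + Suc R) * cheb_T (2*(j + Suc R)) x)\<bar>"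
        unfolding b_def by (simp add: ac_simps)
      also have "\<dots> \<le> C * q^j"
      proof (rule termb)
        show "\<bar>cc (j + Suc R)\<bar> \<le> 2" by (simp add: cc_def)
        show "\<bar>(-1)^(j + Suc R) * cheb_T (2*(j + Suc R)) x\<bar> \<le> 1" by (simp add: abs_mult cheb_abs)
        show "2 \<le> 2*(j + Suc R)" by simp
        show "r + 2 * real j \<le> real (2*(j + Suc R))" using rR by simp
      qed
      finally show "\<bar>b (j + Suc R)\<bar> \<le> C * q^j" .
    qed
    then show ?thesis unfolding ps using final by simp
  qed
  have sinb: "\<bar>sin (t * x)
            - 2 * (\<Sum>k=0..R. (-1) ^ k * bessel_J (2 * k + 1) t * cheb_T (2 * k + 1) x)\<bar> \<le> \<epsilon>" if x: "x \<in> {-1..1}" for x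
  proof -
    define b where "b j = 2 * (-1)^j * bessel_J (2*j+1) t * cheb_T (2*j+1) x" for j
    have bs: "b sums sin (t*x)" unfolding b_def by (rule jacobi_sin[OF x])
    have ps: "(\<Sum>i<Suc R. b i) = 2 * (\<Sum>k=0..R. (-1) ^ k * bessel_J (2 * k + 1) t * cheb_T (2 * k + 1) x)"
      unfolding b_def by (simp add: sum_distrib_left atLeast0AtMost lessThan_Suc_atMost mult.assoc)
    have "\<bar>sin (t*x) - (\<Sum>i<Suc R. b i)\<bar> \<le> C / (1 - q)"
    proof (rule tail_bound[OF bs _ q])
      fix j
      have "\<bar>b (j + Suc R)\<bar> = \<bar>2 * bessel_J (2*(j + Suc R)+1) t * ((-1)^(j + Suc R) * cheb_T (2*(j + Suc R)+1) x)\<bar>"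
        unfolding b_def by (simp add: ac_simps)
      also have "\<dots> \<le> C * q^j"
      proof (rule termb)
        show "\<bar>2::real\<bar> \<le> 2" by simp
        show "\<bar>(-1)^(j + Suc R) * cheb_T (2*(j + Suc R)+1) x\<bar> \<le> 1" by (simp add: abs_mult cheb_abs)
        show "2 \<le> 2*(j + Suc R)+1" by simp
        show "r + 2 * real j \<le> real (2*(j + Suc R)+1)" using rR by simp
      qed
      finally show "\<bar>b (j + Suc R)\<bar> \<le> C * q^j" .
    qed
    then show ?thesis unfolding ps using final by simp
  qed
  show ?thesis
  proof
    show "(SUP x\<in>{-1..1}. \<bar>cos (t * x) - (bessel_J 0 t
            + 2 * (\<Sum>k=1..R. (-1) ^ k * bessel_J (2 * k) t * cheb_T (2 * k) x))\<bar>) \<le> \<epsilon>"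
      by (rule cSUP_least) (use cosb in auto)
    show "(SUP x\<in>{-1..1}. \<bar>sin (t * x)
            - 2 * (\<Sum>k=0..R. (-1) ^ k * bessel_J (2 * k + 1) t * cheb_T (2 * k + 1) x)\<bar>) \<le> \<epsilon>"
      by (rule cSUP_least) (use sinb in auto)
  qed
qed


end
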